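(* For every network $\mathcal N$ and every integer $T\ge1$, $\mathcal R^{\mathcal N}\subseteq\mathcal R^{(\mathcal M_T,\mathcal E_T)}$.
   Context: A network is a triple $\mathcal N=(\mathcal L,\mathcal I,D_{\mathcal L})$ where $\mathcal L$ is a finite nonempty set of links, each $\mathcal I(l)$ is a collection of nonempty subsets of $\mathcal L$, and $D_{\mathcal L}$ assigns an integer $D_{\mathcal L}(l,l')$ to every pair with $l'\in\phi$ for some $\phi\in\mathcal I(l)$. A schedule is a map $S:\mathcal L\times\mathbb Z\to\{0,1\}$; $S(l,t)$ has a collision if there is $\phi\in\mathcal I(l)$ with $S(l',t+D_{\mathcal L}(l,l'))=1$ for all $l'\in\phi$; $S$ is collision free if no $(l,t)$ with $S(l,t)=1$ has a collision. $R_S(l)=\lim_{T\to\infty}\frac1T\sum_{t=0}^{T-1}\iota\big(S(l,t)=1\text{ and collision free}\big)$ when it exists; $R_S=(R_S(l))_l$ is the rate vector. A nonnegative vector $R\in[0,\infty)^{\mathcal L}$ is achievable if for every $\epsilon>0$ some schedule $S$ has a rate vector with $R_S(l)\ge R(l)-\epsilon$ for all $l$; $\mathcal R^{\mathcal N}$ is the set of achievable nonnegative vectors. $S[T,k]$ is the $|\mathcal L|\times T$ binary matrix with $S[T,k](l,j)=S(l,kT+j)$. The scheduling graph $(\mathcal M_T,\mathcal E_T)$ has vertex set $\mathcal M_T$ = all $|\mathcal L|\times T$ binary matrices $A$ with $A=S[T,0]$ for some collision-free schedule $S$, and edge set $\mathcal E_T$ = all pairs $(A,B)$ with $A=S[T,0]$,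 $B=S[T,1]$ for some collision-free schedule $S$. A cycle is a sequence $(A_0,\dots,A_k)$, $k\ge1$, with $(A_i,A_{i+1})\in\mathcal E_T$ for all $i$, $A_k=A_0$, and $A_0,\dots,A_{k-1}$ pairwise distinct; its rate vector is $R_C=\frac{1}{kT}\sum_{i=0}^{k-1}A_i\mathbf 1$ ($\mathbf 1$ the all-ones vector of length $T$). $\mathcal R^{(\mathcal M_T,\mathcal E_T)}$ is the convex hull of the rate vectors of all cycles of $(\mathcal M_T,\mathcal E_T)$. *)

theory Defs
  imports "HOL-Analysis.Analysis"
begin

(* A network: links are the elements of a finite type 'l (finite, nonempty),
   I :: 'l => 'l set set is the interference collection, D :: 'l => 'l => int the delays
   (values of D outside the relevant pairs are irrelevant). *)

definition network :: "('l::finite \<Rightarrow> 'l set set) \<Rightarrow> ('l \<Rightarrow> 'l \<Rightarrow> int) \<Rightarrow> bool" where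
  "network I D \<longleftrightarrow> (\<forall>l. \<forall>\<phi>\<in>I l. \<phi> \<noteq> {})"

type_synonym 'l schedule = "'l \<Rightarrow> int \<Rightarrow> bool"   (* S(l,t) = 1  iff  S l t *)

definition collision :: "('l \<Rightarrow> 'l set set) \<Rightarrow> ('l \<Rightarrow> 'l \<Rightarrow> int) \<Rightarrow> 'l schedule \<Rightarrow> 'l \<Rightarrow> int \<Rightarrow> bool" where
  "collision I D S l t \<longleftrightarrow> (\<exists>\<phi>\<in>I l. \<forall>l'\<in>\<phi>. S l' (t + D l l'))"

definition collision_free :: "('l \<Rightarrow> 'l set set) \<Rightarrow> ('l \<Rightarrow> 'l \<Rightarrow> int) \<Rightarrow> 'l schedule \<Rightarrow> bool" where
  "collision_free I D S \<longleftrightarrow> (\<forall>l t. S l t \<longrightarrow> \<not> collision I D S l t)"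

definition avg_success :: "('l \<Rightarrow> 'l set set) \<Rightarrow> ('l \<Rightarrow> 'l \<Rightarrow> int) \<Rightarrow> 'l schedule \<Rightarrow> 'l \<Rightarrow> nat \<Rightarrow> real" where
  "avg_success I D S l T = (1 / real T) *
     (\<Sum>t<T. if S l (int t) \<and> \<not> collision I D S l (int t) then 1 else 0)"

definition has_rate_vector :: "('l::finite \<Rightarrow> 'l set set) \<Rightarrow> ('l \<Rightarrow> 'l \<Rightarrow> int) \<Rightarrow> 'l schedule \<Rightarrow> real^'l \<Rightarrow> bool" where
  "has_rate_vector I D S r \<longleftrightarrow> (\<forall>l. avg_success I D S l \<longlonglongrightarrow> r $ l)"

definition achievable :: "('l::finite \<Rightarrow> 'l set set) \<Rightarrow> ('l \<Rightarrow> 'l \<Rightarrow> int) \<Rightarrow> real^'l \<Rightarrow> bool" where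
  "achievable I D R \<longleftrightarrow> (\<forall>\<epsilon>>0. \<exists>S r. has_rate_vector I D S r \<and> (\<forall>l. r $ l \<ge> R $ l - \<epsilon>))"

definition rate_region :: "('l::finite \<Rightarrow> 'l set set) \<Rightarrow> ('l \<Rightarrow> 'l \<Rightarrow> int) \<Rightarrow> (real^'l) set" where
  "rate_region I D = {R. (\<forall>l. R $ l \<ge> 0) \<and> achievable I D R}"

(* |L| x T binary matrices, represented as 'l => nat => bool, with all entries at column
   indices j >= T fixed to False (so that equality of matrices is meaningful) *)
type_synonym 'l bmat = "'l \<Rightarrow> nat \<Rightarrow> bool"

definition block :: "'l schedule \<Rightarrow> nat \<Rightarrow> int \<Rightarrow> 'l bmat" where
  "block S T k = (\<lambda>l j. j < T \<and> S l (k * int T + int j))"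

definition sched_vertices :: "('l \<Rightarrow> 'l set set) \<Rightarrow> ('l \<Rightarrow> 'l \<Rightarrow> int) \<Rightarrow> nat \<Rightarrow> 'l bmat set" where
  "sched_vertices I D T = {block S T 0 | S. collision_free I D S}"

definition sched_edges :: "('l \<Rightarrow> 'l set set) \<Rightarrow> ('l \<Rightarrow> 'l \<Rightarrow> int) \<Rightarrow> nat \<Rightarrow> ('l bmat \<times> 'l bmat) set" where
  "sched_edges I D T = {(block S T 0, block S T 1) | S. collision_free I D S}"

definition is_cycle :: "('l \<Rightarrow> 'l set set) \<Rightarrow> ('l \<Rightarrow> 'l \<Rightarrow> int) \<Rightarrow> nat \<Rightarrow> (nat \<Rightarrow> 'l bmat) \<Rightarrow> nat \<Rightarrow> bool" where
  "is_cycle I D T A k \<longleftrightarrow> k \<ge> 1 \<and> (\<forall>i<k. (A i, A (Suc i)) \<in> sched_edges I D T)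
      \<and> A k = A 0 \<and> inj_on A {..<k}"

definition cycle_rate :: "nat \<Rightarrow> (nat \<Rightarrow> 'l::finite bmat) \<Rightarrow> nat \<Rightarrow> real^'l" where
  "cycle_rate T A k = (\<chi> l. (1 / (real k * real T)) * (\<Sum>i<k. \<Sum>j<T. if A i l j then 1 else 0))"

definition graph_rate_region :: "('l::finite \<Rightarrow> 'l set set) \<Rightarrow> ('l \<Rightarrow> 'l \<Rightarrow> int) \<Rightarrow> nat \<Rightarrow> (real^'l) set" where
  "graph_rate_region I D T = convex hull {cycle_rate T A k | A k. is_cycle I D T A k}"

end

theory Submission
  imports Defs
begin

definition wv :: "nat \<Rightarrow> 'l::finite bmat \<Rightarrow> real^'l" where
  "wv T A = (\<chi> l. \<Sum>j<T. if A l j then 1 else 0)"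

definition walk :: "('l \<Rightarrow> 'l set set) \<Rightarrow> ('l \<Rightarrow> 'l \<Rightarrow> int) \<Rightarrow> nat \<Rightarrow> (nat \<Rightarrow> 'l bmat) \<Rightarrow> nat \<Rightarrow> bool" where
  "walk I D T A k \<longleftrightarrow> (\<forall>i<k. (A i, A (Suc i)) \<in> sched_edges I D T)"

definition wrate :: "nat \<Rightarrow> (nat \<Rightarrow> 'l::finite bmat) \<Rightarrow> nat \<Rightarrow> real^'l" where
  "wrate T A k = (1 / (real k * real T)) *\<^sub>R (\<Sum>i<k. wv T (A i))"

lemma cycle_rate_eq: "cycle_rate T A k = wrate T A k"
  unfolding cycle_rate_def wrate_def wv_def
  by (simp add: vec_eq_iff sum_component)

lemma sum_split_cut:
  fixes f :: "nat \<Rightarrow> 'a::comm_monoid_add"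
  assumes "i + a \<le> k"
  shows "(\<Sum>n<k. f n) = (\<Sum>n<a. f (i+n)) + (\<Sum>n<k-a. if n < i then f n else f (n+a))"
proof -
  have e1: "(\<Sum>n<k-a. if n < i then f n else f (n+a)) = (\<Sum>n\<in>{0..<i}. f n) + (\<Sum>n\<in>{i..<k-a}. f (n+a))"
  proof -
    have "(\<Sum>n<k-a. if n < i then f n else f (n+a)) = (\<Sum>n\<in>{0..<i}. if n < i then f n else f (n+a)) + (\<Sum>n\<in>{i..<k-a}. if n < i then f n else f (n+a))"
      using assms sum.atLeastLessThan_concat[of 0 i "k-a" "\<lambda>n. if n < i then f n else f (n+a)"] by (simp add: lessThan_atLeast0)
    also have "\<dots> = (\<Sum>n\<in>{0..<i}. f n) + (\<Sum>n\<in>{i..<k-a}. f (n+a))"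
      by (intro arg_cong2[where f="(+)"] sum.cong) auto
    finally show ?thesis .
  qed
  have e2: "(\<Sum>n\<in>{i..<k-a}. f (n+a)) = (\<Sum>n\<in>{i+a..<k}. f n)"
    using assms sum.shift_bounds_nat_ivl[of f i a "k-a"] by (simp add: add.commute)
  have e3: "(\<Sum>n<a. f (i+n)) = (\<Sum>n\<in>{i..<i+a}. f n)"
    using sum.shift_bounds_nat_ivl[of f 0 i a] by (simp add: lessThan_atLeast0 add.commute)
  have "(\<Sum>n<k. f n) = (\<Sum>n\<in>{0..<i}. f n) + (\<Sum>n\<in>{i..<i+a}. f n) + (\<Sum>n\<in>{i+a..<k}. f n)"
    using assms by (simp add: lessThan_atLeast0 sum.atLeastLessThan_concat)
  then show ?thesis using e1 e2 e3 by (simp add: algebra_simps)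
qed

lemma collision_mono:
  assumes "\<And>m t. S' m t \<Longrightarrow> S m t" "collision I D S' l t"
  shows "collision I D S l t"
  using assms unfolding collision_def by blast

lemma zero_cycle_in: "wrate T ((\<lambda>_ _ _. False) :: nat \<Rightarrow> 'l::finite bmat) 1 \<in> graph_rate_region I D T"
proof -
  have cf: "collision_free I D (\<lambda>_ _. False)" unfolding collision_free_def by simp
  have "((\<lambda>_ _. False), (\<lambda>_ _. False)) \<in> sched_edges I D T"
    unfolding sched_edges_def block_def using cf by fastforce
  then have "is_cycle I D T ((\<lambda>_ _ _. False) :: nat \<Rightarrow> 'l bmat) 1" unfolding is_cycle_def by (auto simp: inj_on_def)
  then show ?thesis unfolding graph_rate_region_def cycle_rate_eq[symmetric]
    by (intro hull_inc) blast
qed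

lemma walk_cut:
  assumes w: "walk I D T A k" and ij: "i < j" "j < k" "A i = A j"
  shows "walk I D T (\<lambda>n. A (i+n)) (j-i)"
    and "walk I D T (\<lambda>n. if n < i then A n else A (n + (j-i))) (k-(j-i))"
    and "(\<lambda>n. if n < i then A n else A (n + (j-i))) 0 = A 0"
    and "(\<lambda>n. if n < i then A n else A (n + (j-i))) (k-(j-i)) = A k"
proof -
  show "walk I D T (\<lambda>n. A (i+n)) (j-i)"
    using w ij unfolding walk_def by auto
  show "walk I D T (\<lambda>n. if n < i then A n else A (n + (j-i))) (k-(j-i))"
    unfolding walk_def
  proof (intro allI impI)
    fix n assume n: "n < k - (j-i)"
    show "((if n < i then A n else A (n + (j-i))), (if Suc n < i then A (Suc n) else A (Suc n + (j-i)))) \<in> sched_edges I D T"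
    proof (cases "Suc n < i")
      case True then show ?thesis using w ij unfolding walk_def by auto
    next
      case False
      show ?thesis
      proof (cases "n < i")
        case True
        then have sn: "Suc n = i" using False by auto
        then have "Suc n + (j-i) = j" using ij by auto
        moreover have "n < k" using ij sn by auto
        then have "(A n, A (Suc n)) \<in> sched_edges I D T" using w unfolding walk_def by blast
        ultimately show ?thesis using True False sn ij by (simp add: add.commute)
      next
        case False
        then have "(A (n + (j-i)), A (Suc (n + (j-i)))) \<in> sched_edges I D T"
          using w ij n unfolding walk_def by auto
        then show ?thesis using False by auto
      qed
    qed
  qed
  show "(\<lambda>n. if n < i then A n else A (n + (j-i))) 0 = A 0"
    using ij by auto
  show "(\<lambda>n. if n < i then A n else A (n + (j-i))) (k-(j-i)) = A k"
    using ij by auto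
qed

lemma not_inj_pair:
  fixes A :: "nat \<Rightarrow> 'b"
  assumes "\<not> inj_on A {..<k}"
  obtains i j where "i < j" "j < k" "A i = A j"
proof -
  obtain x y where "x < k" "y < k" "x \<noteq> y" "A x = A y"
    using assms unfolding inj_on_def by auto
  then show ?thesis
  proof (cases "x < y")
    case True then show ?thesis using that \<open>y < k\<close> \<open>A x = A y\<close> by blast
  next
    case False then have "y < x" using \<open>x \<noteq> y\<close> by auto
    then show ?thesis using that \<open>x < k\<close> \<open>A x = A y\<close> by metis
  qed
qed

lemma wrate_split:
  assumes "0 < a" "a < k"
    and that: "(\<Sum>n<k. wv T (A n)) = (\<Sum>n<a. wv T (B n)) + (\<Sum>n<k-a. wv T (C n))"
  shows "wrate T A k = (real a / real k) *\<^sub>R wrate T B a + (real (k-a) / real k) *\<^sub>R wrate T C (k-a)"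
proof (cases "T = 0")
  case True then show ?thesis unfolding wrate_def by simp
next
  case False
  have "k - a > 0" using assms by auto
  have c1: "real a / real k * (1 / (real a * real T)) = 1 / (real k * real T)"
    using assms False by (simp add: field_simps)
  have c2: "real (k-a) / real k * (1 / (real (k-a) * real T)) = 1 / (real k * real T)"
    using assms False \<open>k - a > 0\<close> by (simp add: field_simps)
  show ?thesis unfolding wrate_def that scaleR_scaleR c1 c2 scaleR_add_right ..
qed

lemma closed_walk_rate:
  "walk I D T A k \<Longrightarrow> k \<ge> 1 \<Longrightarrow> A k = A 0 \<Longrightarrow> wrate T A k \<in> graph_rate_region I D T"
proof (induction k arbitrary: A rule: less_induct)
  case (less k A)
  show ?case
  proof (cases "inj_on A {..<k}")
    case True
    then have "is_cycle I D T A k" using less.prems unfolding is_cycle_def walk_def by auto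
    then show ?thesis unfolding graph_rate_region_def cycle_rate_eq[symmetric]
      by (intro hull_inc) blast
  next
    case False
    then obtain i j where ij: "i < j" "j < k" "A i = A j" by (rule not_inj_pair)
    define a where "a = j - i"
    note cut = walk_cut[OF less.prems(1) ij, folded a_def]
    have r1: "wrate T (\<lambda>n. A (i+n)) a \<in> graph_rate_region I D T"
      using less.IH[of a "\<lambda>n. A (i+n)"] cut ij a_def by auto
    have r2: "wrate T (\<lambda>n. if n < i then A n else A (n + a)) (k-a) \<in> graph_rate_region I D T"
      using less.IH[of "k-a" "\<lambda>n. if n < i then A n else A (n + a)"] cut ij a_def less.prems by auto
    have "(\<Sum>n<k. wv T (A n)) = (\<Sum>n<a. wv T (A (i+n))) + (\<Sum>n<k-a. wv T (if n < i then A n else A (n + a)))"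
      using sum_split_cut[of i a k "\<lambda>n. wv T (A n)"] ij a_def by (simp add: if_distrib)
    then have "wrate T A k = (real a / real k) *\<^sub>R wrate T (\<lambda>n. A (i+n)) a + (real (k-a) / real k) *\<^sub>R wrate T (\<lambda>n. if n < i then A n else A (n + a)) (k-a)"
      using ij a_def by (intro wrate_split) auto
    also have "\<dots> \<in> graph_rate_region I D T"
      unfolding graph_rate_region_def
      apply (rule convexD[OF convex_convex_hull])
      using r1 r2 ij a_def unfolding graph_rate_region_def using ij a_def by (auto simp: of_nat_diff add_divide_distrib[symmetric])
    finally show ?thesis .
  qed
qed

lemma finite_vertices:
  fixes I :: "'l::finite \<Rightarrow> 'l set set"
  shows "finite (sched_vertices I D T)"
proof -
  have "sched_vertices I D T \<subseteq> (\<lambda>P l j. (l,j) \<in> P) ` Pow (UNIV \<times> {..<T})"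
  proof
    fix A assume "A \<in> sched_vertices I D T"
    then have "\<forall>l j. A l j \<longrightarrow> j < T" unfolding sched_vertices_def block_def by auto
    then have "A = (\<lambda>l j. (l,j) \<in> {(l,j). A l j})" "{(l,j). A l j} \<in> Pow (UNIV \<times> {..<T})" by auto
    then show "A \<in> (\<lambda>P l j. (l,j) \<in> P) ` Pow (UNIV \<times> {..<T})" by blast
  qed
  moreover have "finite ((\<lambda>P l j. (l,j) \<in> P) ` Pow (UNIV \<times> {..<(T::nat)}) :: ('a::finite bmat) set)"
    by auto
  ultimately show ?thesis by (rule finite_subset)
qed

lemma edge_vertex: "(A, B) \<in> sched_edges I D T \<Longrightarrow> A \<in> sched_vertices I D T"
  unfolding sched_edges_def sched_vertices_def by auto

lemma wv_bounds: "0 \<le> wv T A $ l" "wv T A $ l \<le> real T"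
proof -
  show "0 \<le> wv T A $ l" unfolding wv_def by (simp add: sum_nonneg)
  have "wv T A $ l \<le> (\<Sum>j<T. (1::real))" unfolding wv_def vec_lambda_beta by (rule sum_mono) simp
  then show "wv T A $ l \<le> real T" by simp
qed

lemma sum_wv_bounds: "0 \<le> (\<Sum>i<k. wv T (A i)) $ l" "(\<Sum>i<k. wv T (A i)) $ l \<le> real k * real T"
proof -
  show "0 \<le> (\<Sum>i<k. wv T (A i)) $ l" by (simp add: sum_component sum_nonneg wv_bounds)
  have "(\<Sum>i<k. wv T (A i)) $ l \<le> (\<Sum>i<k. real T)" unfolding sum_component by (rule sum_mono) (simp add: wv_bounds)
  then show "(\<Sum>i<k. wv T (A i)) $ l \<le> real k * real T" by simp
qed

lemma walk_decomp:
  fixes A :: "nat \<Rightarrow> 'l::finite bmat"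
  assumes T: "T \<ge> 1"
  shows "walk I D T A k \<Longrightarrow> \<exists>m h. m \<le> k \<and> k \<le> m + card (sched_vertices I D T) \<and> h \<in> graph_rate_region I D T \<and>
     (\<forall>l. real m * real T * h$l \<le> (\<Sum>i<k. wv T (A i))$l \<and> (\<Sum>i<k. wv T (A i))$l \<le> real m * real T * h$l + real (k-m) * real T)"
proof (induction k arbitrary: A rule: less_induct)
  case (less k A)
  show ?case
  proof (cases "inj_on A {..<k}")
    case True
    have ed: "\<forall>i<k. (A i, A (Suc i)) \<in> sched_edges I D T"
      using less.prems unfolding walk_def by auto
    have sub: "A ` {..<k} \<subseteq> sched_vertices I D T"
    proof
      fix x assume "x \<in> A ` {..<k}"
      then obtain i where "i < k" "x = A i" by auto
      then show "x \<in> sched_vertices I D T" using ed edge_vertex by metis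
    qed
    have "card {..<k} \<le> card (sched_vertices I D T)"
      by (rule card_inj_on_le[OF True sub finite_vertices])
    then have kb: "k \<le> 0 + card (sched_vertices I D T)" by simp
    show ?thesis
    proof (rule exI[of _ 0], rule exI[of _ "wrate T ((\<lambda>_ _ _. False) :: nat \<Rightarrow> 'l bmat) 1"], intro conjI allI)
      show "0 \<le> k" by simp
      show "k \<le> 0 + card (sched_vertices I D T)" by (rule kb)
      show "wrate T ((\<lambda>_ _ _. False) :: nat \<Rightarrow> 'l bmat) 1 \<in> graph_rate_region I D T" by (rule zero_cycle_in)
      fix l
      show "real 0 * real T * wrate T ((\<lambda>_ _ _. False) :: nat \<Rightarrow> 'l bmat) 1 $ l \<le> (\<Sum>i<k. wv T (A i)) $ l"
        using sum_wv_bounds(1) by simp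
      show "(\<Sum>i<k. wv T (A i)) $ l \<le> real 0 * real T * wrate T ((\<lambda>_ _ _. False) :: nat \<Rightarrow> 'l bmat) 1 $ l + real (k - 0) * real T"
        using sum_wv_bounds(2) by simp
    qed
  next
    case False
    then obtain i j where ij: "i < j" "j < k" "A i = A j" by (rule not_inj_pair)
    define a where "a = j - i"
    define C2 where "C2 = (\<lambda>n. if n < i then A n else A (n + a))"
    note cut = walk_cut[OF less.prems(1) ij]
    have wC2: "walk I D T C2 (k-a)" using cut(2) unfolding C2_def a_def .
    have kl: "k - a < k" using ij a_def by auto
    define h1 where "h1 = wrate T (\<lambda>n. A (i+n)) a"
    have r1: "h1 \<in> graph_rate_region I D T"
      unfolding h1_def using closed_walk_rate[of I D T "\<lambda>n. A (i+n)" a] cut ij a_def by auto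
    obtain m' h' where IH: "m' \<le> k - a" "k - a \<le> m' + card (sched_vertices I D T)" "h' \<in> graph_rate_region I D T"
      "\<forall>l. real m' * real T * h'$l \<le> (\<Sum>i<k-a. wv T (C2 i))$l \<and> (\<Sum>i<k-a. wv T (C2 i))$l \<le> real m' * real T * h'$l + real ((k-a)-m') * real T"
      using less.IH[OF kl wC2] by blast
    have split: "(\<Sum>n<k. wv T (A n)) = (\<Sum>n<a. wv T (A (i+n))) + (\<Sum>n<k-a. wv T (C2 n))"
      using sum_split_cut[of i a k "\<lambda>n. wv T (A n)"] ij a_def unfolding C2_def by (simp add: if_distrib)
    have apos: "a > 0" using ij a_def by auto
    have h1eq: "real a * real T * h1 $ l = (\<Sum>n<a. wv T (A (i+n))) $ l" for l
      unfolding h1_def wrate_def using apos T by simp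
    define m where "m = a + m'"
    have mpos: "m > 0" using apos m_def by auto
    define h where "h = (real a / real m) *\<^sub>R h1 + (real m' / real m) *\<^sub>R h'"
    have hin: "h \<in> graph_rate_region I D T"
      unfolding h_def graph_rate_region_def
      apply (rule convexD[OF convex_convex_hull])
      using r1 IH(3) mpos unfolding graph_rate_region_def m_def by (auto simp: add_divide_distrib[symmetric])
    have heq: "real m * real T * h $ l = real a * real T * h1 $ l + real m' * real T * h' $ l" for l
    proof -
      have q1: "real m * (real a / real m) = real a" "real m * (real m' / real m) = real m'" using mpos by auto
      have "real m * real T * h$l = real T * (real m * (real a / real m)) * h1$l + real T * (real m * (real m'/real m)) * h'$l"
        unfolding h_def by (simp add: algebra_simps)
      then show ?thesis unfolding q1 by simp
    qed
    have km: "k - m = (k - a) - m'" unfolding m_def by simp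
    show ?thesis
    proof (rule exI[of _ m], rule exI[of _ h], intro conjI allI)
      show "m \<le> k" using IH(1) ij a_def m_def by auto
      show "k \<le> m + card (sched_vertices I D T)" using IH(2) ij a_def m_def by auto
      show "h \<in> graph_rate_region I D T" by (rule hin)
      fix l
      show "real m * real T * h $ l \<le> (\<Sum>i<k. wv T (A i)) $ l"
        using IH(4) heq[of l] h1eq[of l] split by simp
      show "(\<Sum>i<k. wv T (A i)) $ l \<le> real m * real T * h $ l + real (k - m) * real T"
        using IH(4) heq[of l] h1eq[of l] split km by simp
    qed
  qed
qed

lemma region_box:
  assumes "h \<in> graph_rate_region I D T"
  shows "0 \<le> h$l \<and> h$l \<le> 1"
proof -
  have "graph_rate_region I D T \<subseteq> {x. \<forall>l. 0 \<le> x$l \<and> x$l \<le> 1}"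
    unfolding graph_rate_region_def
  proof (rule hull_minimal)
    show "{cycle_rate T A k |A k. is_cycle I D T A k} \<subseteq> {x. \<forall>l. 0 \<le> x$l \<and> x$l \<le> 1}"
    proof (clarify)
      fix A and k :: nat and l
      let ?s = "(\<Sum>i<k. wv T (A i)) $ l"
      have b: "0 \<le> ?s" "?s \<le> real k * real T" using sum_wv_bounds by auto
      have e: "cycle_rate T A k $ l = ?s / (real k * real T)"
        unfolding cycle_rate_eq wrate_def by simp
      show "0 \<le> cycle_rate T A k $ l \<and> cycle_rate T A k $ l \<le> 1"
      proof (cases "real k * real T = 0")
        case True then have "cycle_rate T A k $ l = 0" using e by simp
        then show ?thesis by simp
      next
        case False
        then have "real k * real T > 0" by simp
        then show ?thesis using e b by (simp add: divide_le_eq_1)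
      qed
    qed
    show "convex {x::real^'a. \<forall>l. 0 \<le> x$l \<and> x$l \<le> 1}"
      unfolding convex_def
    proof (clarify)
      fix x y :: "real^'a" and u v :: real and l
      assume xy: "\<forall>l. 0 \<le> x$l \<and> x$l \<le> 1" "\<forall>l. 0 \<le> y$l \<and> y$l \<le> 1" and uv: "0 \<le> u" "0 \<le> v" "u + v = 1"
      have "u * x$l \<le> u" "v * y$l \<le> v" using xy uv by (auto intro: mult_left_le)
      moreover have "0 \<le> u * x$l" "0 \<le> v * y$l" using xy uv by auto
      ultimately show "0 \<le> (u *\<^sub>R x + v *\<^sub>R y) $ l \<and> (u *\<^sub>R x + v *\<^sub>R y) $ l \<le> 1"
        using uv by simp
    qed
  qed
  then show ?thesis using assms by blast
qed

lemma region_closed: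
  fixes I :: "'l::finite \<Rightarrow> 'l set set"
  shows "closed (graph_rate_region I D T)"
proof -
  define V where "V = sched_vertices I D T"
  have fV: "finite V" unfolding V_def by (rule finite_vertices)
  have sub: "{cycle_rate T A k |A k. is_cycle I D T A k} \<subseteq>
      (\<lambda>(k,f). cycle_rate T f k) ` (SIGMA k:{..card V}. PiE {..<k} (\<lambda>_. V))"
  proof clarify
    fix A k assume c: "is_cycle I D T A k"
    have ed: "\<forall>i<k. (A i, A (Suc i)) \<in> sched_edges I D T" and inj: "inj_on A {..<k}"
      using c unfolding is_cycle_def by auto
    have sub: "A ` {..<k} \<subseteq> V"
    proof
      fix x assume "x \<in> A ` {..<k}"
      then obtain i where "i < k" "x = A i" by auto
      then show "x \<in> V" using ed edge_vertex unfolding V_def by metis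
    qed
    have "card {..<k} \<le> card V" by (rule card_inj_on_le[OF inj sub fV])
    then have kb: "k \<le> card V" by simp
    have "cycle_rate T A k = cycle_rate T (restrict A {..<k}) k"
      unfolding cycle_rate_def by (intro arg_cong[where f=vec_lambda] ext arg_cong2[where f="(*)"] sum.cong) auto
    moreover have "restrict A {..<k} \<in> PiE {..<k} (\<lambda>_. V)" using sub by auto
    ultimately show "cycle_rate T A k \<in> (\<lambda>(k,f). cycle_rate T f k) ` (SIGMA k:{..card V}. PiE {..<k} (\<lambda>_. V))"
      using kb by (intro image_eqI[of _ _ "(k, restrict A {..<k})"]) auto
  qed
  have "finite (SIGMA k:{..card V}. PiE {..<k} (\<lambda>_. V))"
    using fV by (intro finite_SigmaI finite_PiE) auto
  then have "finite {cycle_rate T A k |A k. is_cycle I D T A k}"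
    using sub finite_subset by blast
  then show ?thesis unfolding graph_rate_region_def
    by (intro compact_imp_closed compact_convex_hull finite_imp_compact)
qed

definition zrow :: "'l \<Rightarrow> 'l bmat \<Rightarrow> 'l bmat" where
  "zrow l A = (\<lambda>m j. m \<noteq> l \<and> A m j)"

lemma edge_zrow:
  assumes "(A, B) \<in> sched_edges I D T"
  shows "(zrow l A, zrow l B) \<in> sched_edges I D T"
proof -
  obtain S where S: "A = block S T 0" "B = block S T 1" "collision_free I D S"
    using assms unfolding sched_edges_def by auto
  define S' where "S' = (\<lambda>m t. m \<noteq> l \<and> S m t)"
  have "collision_free I D S'"
    using S(3) collision_mono[of S' S] unfolding collision_free_def S'_def by blast
  moreover have "block S' T k = zrow l (block S T k)" for k
    unfolding block_def zrow_def S'_def by auto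
  ultimately show ?thesis unfolding sched_edges_def using S
    by (metis (mono_tags, lifting) mem_Collect_eq)
qed

lemma zero_coord:
  fixes I :: "'l::finite \<Rightarrow> 'l set set"
  assumes "x \<in> graph_rate_region I D T"
  shows "(\<chi> m. if m = l then 0 else x$m) \<in> graph_rate_region I D T"
proof -
  define Z where "Z = (\<lambda>x::real^'l. \<chi> m. if m = l then 0 else x$m)"
  have lin: "linear Z"
    by (rule linearI) (auto simp: Z_def vec_eq_iff)
  have "Z ` {cycle_rate T A k |A k. is_cycle I D T A k} \<subseteq> graph_rate_region I D T"
  proof clarify
    fix A k assume c: "is_cycle I D T A k"
    have ed: "\<forall>i<k. (A i, A (Suc i)) \<in> sched_edges I D T"
      using c unfolding is_cycle_def by auto
    have w: "walk I D T (\<lambda>i. zrow l (A i)) k" unfolding walk_def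
      using ed edge_zrow by metis
    have "Z (cycle_rate T A k) = wrate T (\<lambda>i. zrow l (A i)) k"
      unfolding cycle_rate_eq Z_def wrate_def by (auto simp: vec_eq_iff sum_component wv_def zrow_def)
    also have "\<dots> \<in> graph_rate_region I D T"
      using closed_walk_rate[OF w] c unfolding is_cycle_def by auto
    finally show "Z (cycle_rate T A k) \<in> graph_rate_region I D T" .
  qed
  then have "convex hull (Z ` {cycle_rate T A k |A k. is_cycle I D T A k}) \<subseteq> graph_rate_region I D T"
    by (rule hull_minimal) (simp_all add: graph_rate_region_def convex_convex_hull)
  moreover have "Z x \<in> convex hull (Z ` {cycle_rate T A k |A k. is_cycle I D T A k})"
    using in_convex_hull_linear_image[OF lin] assms unfolding graph_rate_region_def by simp
  ultimately have "Z x \<in> graph_rate_region I D T" by (rule subsetD)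
  then show ?thesis unfolding Z_def .
qed

lemma coord_scale:
  fixes I :: "'l::finite \<Rightarrow> 'l set set"
  assumes x: "x \<in> graph_rate_region I D T" and c: "0 \<le> c" "c \<le> x$l"
  shows "(\<chi> m. if m = l then c else x$m) \<in> graph_rate_region I D T"
proof (cases "x$l = 0")
  case True
  then have "c = 0" using c by auto
  from zero_coord[OF x, of l] show ?thesis unfolding \<open>c = 0\<close> .
next
  case False
  then have xl: "x$l > 0" using c by auto
  define t where "t = c / x$l"
  have t: "0 \<le> t" "t \<le> 1" using c xl unfolding t_def by (auto simp: divide_le_eq_1)
  have "t *\<^sub>R x + (1 - t) *\<^sub>R (\<chi> m. if m = l then 0 else x$m) \<in> graph_rate_region I D T"
    using zero_coord[OF x, of l] x t unfolding graph_rate_region_def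
    by (intro convexD[OF convex_convex_hull]) auto
  moreover have "t *\<^sub>R x + (1 - t) *\<^sub>R (\<chi> m. if m = l then 0 else x$m) = (\<chi> m. if m = l then c else x$m)"
    using xl unfolding t_def by (auto simp: vec_eq_iff algebra_simps)
  ultimately show ?thesis by simp
qed

lemma down_aux:
  fixes I :: "'l::finite \<Rightarrow> 'l set set"
  assumes "finite K"
  shows "\<forall>x y. x \<in> graph_rate_region I D T \<longrightarrow> (\<forall>l. 0 \<le> y$l \<and> y$l \<le> x$l) \<longrightarrow> (\<forall>l. l \<notin> K \<longrightarrow> y$l = x$l) \<longrightarrow> y \<in> graph_rate_region I D T"
  using assms
proof (induction K rule: finite_induct)
  case empty
  show ?case
  proof (intro allI impI)
    fix x y :: "real^'l"
    assume "x \<in> graph_rate_region I D T" "\<forall>l. l \<notin> {} \<longrightarrow> y$l = x$l"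
    moreover have "y = x" using calculation by (simp add: vec_eq_iff)
    ultimately show "y \<in> graph_rate_region I D T" by simp
  qed
next
  case (insert l K)
  show ?case
  proof (intro allI impI)
    fix x y :: "real^'l"
    assume x: "x \<in> graph_rate_region I D T" and y: "\<forall>l. 0 \<le> y$l \<and> y$l \<le> x$l"
      and o: "\<forall>m. m \<notin> insert l K \<longrightarrow> y$m = x$m"
    define x' where "x' = (\<chi> m. if m = l then y$l else x$m)"
    have x': "x' \<in> graph_rate_region I D T" unfolding x'_def using coord_scale[OF x] y by blast
    have "\<forall>m. 0 \<le> y$m \<and> y$m \<le> x'$m" using y unfolding x'_def by auto
    moreover have "\<forall>m. m \<notin> K \<longrightarrow> y$m = x'$m" using o unfolding x'_def by auto
    ultimately show "y \<in> graph_rate_region I D T" using insert.IH x' by blast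
  qed
qed

lemma downward:
  fixes I :: "'l::finite \<Rightarrow> 'l set set"
  assumes "x \<in> graph_rate_region I D T" "\<And>l. 0 \<le> y$l" "\<And>l. y$l \<le> x$l"
  shows "y \<in> graph_rate_region I D T"
  using down_aux[of UNIV I D T] assms by auto

lemma sum_add_split_nat:
  fixes f :: "nat \<Rightarrow> 'a::comm_monoid_add"
  shows "(\<Sum>t<a+b. f t) = (\<Sum>t<a. f t) + (\<Sum>j<b. f (a+j))"
  by (induction b) (simp_all add: add.assoc)

lemma block_sum:
  fixes f :: "nat \<Rightarrow> 'a::comm_monoid_add"
  shows "(\<Sum>i<n. \<Sum>j<T. f (i*T+j)) = (\<Sum>t<n*T. f t)"
proof (induction n)
  case 0 then show ?case by simp
next
  case (Suc n)
  have "(\<Sum>t<Suc n*T. f t) = (\<Sum>t<n*T + T. f t)" by (simp add: add.commute)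
  also have "\<dots> = (\<Sum>t<n*T. f t) + (\<Sum>j<T. f (n*T+j))" by (rule sum_add_split_nat)
  finally show ?case using Suc by simp
qed

definition succ where "succ I D S = (\<lambda>l t. S l t \<and> \<not> collision I D S l t)"

lemma success_sched:
  shows "collision_free I D (succ I D S)" "avg_success I D (succ I D S) = avg_success I D S"
proof -
  have le: "\<And>m t. succ I D S m t \<Longrightarrow> S m t" by (simp add: succ_def)
  have nc: "\<not> collision I D (succ I D S) l t" if "\<not> collision I D S l t" for l t
  proof
    assume c: "collision I D (succ I D S) l t"
    have "collision I D S l t" by (rule collision_mono[OF le c])
    then show False using that by simp
  qed
  show "collision_free I D (succ I D S)"
    unfolding collision_free_def
  proof (intro allI impI)
    fix l t assume "succ I D S l t"
    then have "\<not> collision I D S l t" unfolding succ_def by simp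
    then show "\<not> collision I D (succ I D S) l t" by (rule nc)
  qed
  have "(succ I D S l t \<and> \<not> collision I D (succ I D S) l t) = (S l t \<and> \<not> collision I D S l t)" for l t
  proof
    assume "succ I D S l t \<and> \<not> collision I D (succ I D S) l t"
    then show "S l t \<and> \<not> collision I D S l t" unfolding succ_def by simp
  next
    assume a: "S l t \<and> \<not> collision I D S l t"
    then have "succ I D S l t" unfolding succ_def by simp
    then show "succ I D S l t \<and> \<not> collision I D (succ I D S) l t" using nc a by blast
  qed
  then show "avg_success I D (succ I D S) = avg_success I D S"
    unfolding avg_success_def by (intro ext) simp
qed

lemma shift_edge:
  assumes cf: "collision_free I D S"
  shows "(block S T (int i), block S T (int (Suc i))) \<in> sched_edges I D T"
proof -
  define S' where "S' = (\<lambda>l t. S l (t + int i * int T))"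
  have "collision I D S' l t = collision I D S l (t + int i * int T)" for l t
    unfolding collision_def S'_def by (simp add: algebra_simps)
  then have "collision_free I D S'" using cf unfolding collision_free_def S'_def by simp
  moreover have "block S' T 0 = block S T (int i)" "block S' T 1 = block S T (int (Suc i))"
    unfolding block_def S'_def by (auto simp: algebra_simps intro!: ext)
  ultimately show ?thesis unfolding sched_edges_def by (metis (mono_tags, lifting) mem_Collect_eq)
qed

lemma count_eq:
  assumes cf: "collision_free I D S"
  shows "(\<Sum>i<n. wv T (block S T (int i))) $ l = real n * real T * avg_success I D S l (n*T)"
proof -
  define g where "g = (\<lambda>t::nat. if S l (int t) then 1 else (0::real))"
  have "(\<Sum>i<n. wv T (block S T (int i))) $ l = (\<Sum>i<n. \<Sum>j<T. g (i*T+j))"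
    unfolding sum_component wv_def block_def g_def by (intro sum.cong refl) simp
  also have "\<dots> = (\<Sum>t<n*T. g t)" by (rule block_sum)
  finally have e1: "(\<Sum>i<n. wv T (block S T (int i))) $ l = (\<Sum>t<n*T. g t)" .
  have e2: "(\<Sum>t<n*T. if S l (int t) \<and> \<not> collision I D S l (int t) then 1 else 0) = (\<Sum>t<n*T. g t)"
    using cf unfolding collision_free_def g_def by (intro sum.cong refl) auto
  show ?thesis
  proof (cases "n * T = 0")
    case True
    then have z: "real n * real T = 0" "{..<n*T} = {}" by (simp, metis lessThan_0)
    show ?thesis unfolding e1 z(2) z(1) by simp
  next
    case False
    then show ?thesis unfolding e1 avg_success_def e2 by simp
  qed
qed

lemma abs_aux:
  fixes p sv q x y z :: real
  assumes "p \<le> sv" "sv \<le> p + x" "q = p + y" "0 \<le> y" "y \<le> x" "x \<le> z"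
  shows "\<bar>q - sv\<bar> \<le> z"
  using assms by (simp add: abs_le_iff)

lemma cf_rate_in:
  fixes I :: "'l::finite \<Rightarrow> 'l set set"
  assumes cf: "collision_free I D S" and hr: "has_rate_vector I D S r" and T: "T \<ge> 1"
  shows "r \<in> graph_rate_region I D T"
proof -
  define B where "B = (\<lambda>i::nat. block S T (int i))"
  define N where "N = card (sched_vertices I D T)"
  have wB: "walk I D T B n" for n unfolding walk_def B_def
    by (intro allI impI) (rule shift_edge[OF cf])
  define Q where "Q = (\<lambda>n m (h::real^'l). m \<le> n \<and> n \<le> m + N \<and> h \<in> graph_rate_region I D T \<and>
     (\<forall>l. real m * real T * h$l \<le> (\<Sum>i<n. wv T (B i))$l \<and> (\<Sum>i<n. wv T (B i))$l \<le> real m * real T * h$l + real (n-m) * real T))"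
  have "\<forall>n. \<exists>m. \<exists>h. Q n m h"
  proof
    fix n
    show "\<exists>m. \<exists>h. Q n m h" unfolding Q_def N_def by (rule walk_decomp[OF T wB])
  qed
  then obtain M where "\<forall>n. \<exists>h. Q n (M n) h" by (metis choice)
  then obtain G where QG: "\<forall>n. Q n (M n) (G n)" by (metis choice)
  have MG: "M n \<le> n \<and> n \<le> M n + N \<and> G n \<in> graph_rate_region I D T \<and>
     (\<forall>l. real (M n) * real T * G n $l \<le> (\<Sum>i<n. wv T (B i))$l \<and> (\<Sum>i<n. wv T (B i))$l \<le> real (M n) * real T * G n $l + real (n - M n) * real T)" for n
    using QG unfolding Q_def by blast
  define a where "a = (\<lambda>l n. avg_success I D S l (n*T))"
  have sumeq: "(\<Sum>i<n. wv T (B i)) $ l = real n * real T * a l n" for n l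
    unfolding B_def a_def by (rule count_eq[OF cf])
  have bound: "\<bar>G n $ l - a l n\<bar> \<le> real N / real n" if n: "n \<ge> 1" for n l
  proof -
    define h where "h = G n $ l"
    define sv where "sv = real n * real T * a l n"
    note MGn = conjunct1[OF MG[of n]] conjunct1[OF conjunct2[OF MG[of n]]]
      conjunct1[OF conjunct2[OF conjunct2[OF MG[of n]]]] spec[OF conjunct2[OF conjunct2[OF conjunct2[OF MG[of n]]]], of l]
    have h01: "0 \<le> h" "h \<le> 1" unfolding h_def using region_box[OF MGn(3), of l] by auto
    have mn: "M n \<le> n" "n \<le> M n + N" by (rule MGn(1), rule MGn(2))
    have bnd: "real (M n) * real T * h \<le> sv" "sv \<le> real (M n) * real T * h + real (n - M n) * real T"
      using MGn(4) unfolding h_def sv_def sumeq by auto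
    define x where "x = real (n - M n) * real T"
    have x0: "0 \<le> x" unfolding x_def by simp
    have xh: "0 \<le> x * h" "x * h \<le> x" using x0 h01 by (simp_all add: mult_left_le)
    have nsplit: "real n * real T * h = real (M n) * real T * h + x * h"
      unfolding x_def using mn by (simp add: of_nat_diff algebra_simps)
    have xN: "x \<le> real N * real T" unfolding x_def using mn by (intro mult_right_mono) auto
    have "\<bar>real n * real T * h - sv\<bar> \<le> real N * real T"
    proof -
      have b2: "sv \<le> real (M n) * real T * h + x" using bnd(2) unfolding x_def .
      show ?thesis by (rule abs_aux[OF bnd(1) b2 nsplit xh xN])
    qed
    moreover have "real n * real T * h - sv = (real n * real T) * (h - a l n)"
      unfolding sv_def by (simp add: algebra_simps)
    ultimately have "(real n * real T) * \<bar>h - a l n\<bar> \<le> real N * real T"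
      by (simp add: abs_mult)
    then have "(\<bar>h - a l n\<bar> * real n) * real T \<le> real N * real T" by (simp add: algebra_simps)
    then have "\<bar>h - a l n\<bar> * real n \<le> real N" using T by (simp add: mult_le_cancel_right_pos)
    then show ?thesis unfolding h_def using n by (simp add: pos_le_divide_eq)
  qed
  have lim_a: "(\<lambda>n. a l n) \<longlonglongrightarrow> r $ l" for l
  proof -
    have sm: "strict_mono (\<lambda>n::nat. n * T)" using T by (intro strict_monoI) simp
    have "avg_success I D S l \<longlonglongrightarrow> r $ l" using hr unfolding has_rate_vector_def by blast
    from LIMSEQ_subseq_LIMSEQ[OF this sm]
    have "(avg_success I D S l \<circ> (\<lambda>n. n * T)) \<longlonglongrightarrow> r $ l" .
    then show ?thesis unfolding a_def comp_def .
  qed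
  have lim_d: "(\<lambda>n. G n $ l - a l n) \<longlonglongrightarrow> 0" for l
  proof (rule Lim_null_comparison)
    show "\<forall>\<^sub>F n in sequentially. norm (G n $ l - a l n) \<le> real N / real n"
      using bound by (intro eventually_sequentiallyI[of 1]) simp
    show "(\<lambda>n. real N / real n) \<longlonglongrightarrow> 0" by (rule lim_const_over_n)
  qed
  have "(\<lambda>n. G n $ l) \<longlonglongrightarrow> r $ l" for l
    using tendsto_add[OF lim_d[of l] lim_a[of l]] by simp
  then have Gt: "G \<longlonglongrightarrow> r" by (rule vec_tendstoI)
  have Gin: "G n \<in> graph_rate_region I D T" for n using MG[of n] by blast
  show ?thesis by (rule closed_sequentially[OF region_closed Gin Gt])
qed

theorem theorem6:
  fixes I :: "'l::finite \<Rightarrow> 'l set set" and D :: "'l \<Rightarrow> 'l \<Rightarrow> int" and T :: nat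
  assumes "network I D" and "T \<ge> 1"
  shows "rate_region I D \<subseteq> graph_rate_region I D T"
proof
  fix R assume "R \<in> rate_region I D"
  then have R0: "\<And>l. 0 \<le> R $ l" and ach: "achievable I D R" unfolding rate_region_def by auto
  have "\<forall>n. \<exists>S r. has_rate_vector I D S r \<and> (\<forall>l. r $ l \<ge> R $ l - inverse (real (Suc n)))"
    using ach unfolding achievable_def by auto
  then obtain SS rr where SR: "\<And>n. has_rate_vector I D (SS n) (rr n) \<and> (\<forall>l. rr n $ l \<ge> R $ l - inverse (real (Suc n)))"
    by metis
  have rin: "rr n \<in> graph_rate_region I D T" for n
  proof -
    have "has_rate_vector I D (succ I D (SS n)) (rr n)"
      using conjunct1[OF SR[of n]] unfolding has_rate_vector_def success_sched(2) .
    then show ?thesis using cf_rate_in[OF success_sched(1) _ assms(2)] by blast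
  qed
  define y where "y = (\<lambda>n. \<chi> l. max 0 (R $ l - inverse (real (Suc n))))"
  have yin: "y n \<in> graph_rate_region I D T" for n
  proof (rule downward[OF rin[of n]])
    fix l
    show "0 \<le> y n $ l" unfolding y_def by simp
    have "0 \<le> rr n $ l" using region_box[OF rin[of n]] by blast
    then show "y n $ l \<le> rr n $ l" unfolding y_def using SR[of n] by simp
  qed
  have "y \<longlonglongrightarrow> R"
  proof (rule vec_tendstoI)
    fix l
    have "(\<lambda>n. max 0 (R $ l - inverse (real (Suc n)))) \<longlonglongrightarrow> max 0 (R $ l - 0)"
      by (intro tendsto_max tendsto_const tendsto_diff LIMSEQ_inverse_real_of_nat)
    then show "(\<lambda>n. y n $ l) \<longlonglongrightarrow> R $ l" unfolding y_def using R0[of l] by simp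
  qed
  then show "R \<in> graph_rate_region I D T"
    by (rule closed_sequentially[OF region_closed yin])
qed

end
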